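(* Let $x$ be a Sturmian word. For every integer $k>1$ and every position $j$ of $x$, there is a factor of $x$ starting at position $j$ that is a $k$-anti-power.
   Context: A Sturmian word is an infinite word having exactly $n+1$ distinct factors of length $n$ for every $n\in\mathbb{N}$. A factor is a contiguous subword. A $k$-anti-power is a word $w=w_1\cdots w_k$ with $|w_1|=\cdots=|w_k|\ge1$ and $w_1,\dots,w_k$ pairwise distinct. *)

theory Defs
  imports Main
begin

text \<open>Infinite words are functions nat => 'a (positions start at 0).
The factor of length n starting at position i is the list of letters x i, ..., x (i+n-1).\<close>

definition factor :: "(nat \<Rightarrow> 'a) \<Rightarrow> nat \<Rightarrow> nat \<Rightarrow> 'a list" where
  "factor x i n = map x [i..<i+n]"

definition factors_of_length :: "(nat \<Rightarrow> 'a) \<Rightarrow> nat \<Rightarrow> 'a list set" where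
  "factors_of_length x n = {factor x i n | i. True}"

text \<open>Sturmian: exactly n+1 distinct factors of length n for every n (finiteness is forced
since card of an infinite set is 0).\<close>
definition sturmian :: "(nat \<Rightarrow> 'a) \<Rightarrow> bool" where
  "sturmian x \<longleftrightarrow> (\<forall>n. finite (factors_of_length x n) \<and> card (factors_of_length x n) = n + 1)"

definition anti_power :: "nat \<Rightarrow> 'a list \<Rightarrow> bool" where
  "anti_power k w \<longleftrightarrow> (\<exists>m \<ge> 1. length w = k * m \<and>
     (\<forall>i<k. \<forall>j<k. i \<noteq> j \<longrightarrow> take m (drop (i*m) w) \<noteq> take m (drop (j*m) w)))"

end

theory Submission
  imports Defs "HOL-Analysis.Kronecker_Approximation_Theorem"
begin

lemma factor_length[simp]: "length (factor x i n) = n"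
  by (simp add: factor_def)

lemma factor_nth[simp]: "t < n \<Longrightarrow> factor x i n ! t = x (i+t)"
  by (simp add: factor_def)

lemma factor_0[simp]: "factor x i 0 = []"
  by (simp add: factor_def)

lemma factor_Suc_snoc: "factor x i (Suc n) = factor x i n @ [x (i+n)]"
  by (simp add: factor_def)

lemma factor_Suc_cons: "factor x i (Suc n) = x i # factor x (Suc i) n"
  by (simp add: factor_def upt_rec)

lemma factor_eq_iff: "factor x i n = factor x j n \<longleftrightarrow> (\<forall>t<n. x(i+t) = x(j+t))"
  by (auto simp: list_eq_iff_nth_eq)

lemma take_factor: "k \<le> n \<Longrightarrow> take k (factor x i n) = factor x i k"
  by (auto simp: list_eq_iff_nth_eq)

lemma drop_factor: "drop k (factor x i n) = factor x (i+k) (n-k)"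
  by (auto simp: list_eq_iff_nth_eq add.assoc)

lemma factor_add: "factor x i (n1+n2) = factor x i n1 @ factor x (i+n1) n2"
  by (auto simp: list_eq_iff_nth_eq nth_append add.assoc)

lemma mem_fol: "u \<in> factors_of_length x n \<longleftrightarrow> (\<exists>i. factor x i n = u)"
  by (auto simp: factors_of_length_def)

lemma fol_take: "take n ` factors_of_length y (Suc n) = factors_of_length y n"
proof
  show "take n ` factors_of_length y (Suc n) \<subseteq> factors_of_length y n"
    by (force simp: mem_fol take_factor)
  show "factors_of_length y n \<subseteq> take n ` factors_of_length y (Suc n)"
  proof
    fix u assume "u \<in> factors_of_length y n"
    then obtain i where "factor y i n = u" by (auto simp: mem_fol)
    then have "u = take n (factor y i (Suc n))" by (simp add: take_factor)
    moreover have "factor y i (Suc n) \<in> factors_of_length y (Suc n)" by (auto simp: mem_fol)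
    ultimately show "u \<in> take n ` factors_of_length y (Suc n)" by blast
  qed
qed

lemma fol_finite_down: "finite (factors_of_length y (Suc n)) \<Longrightarrow> finite (factors_of_length y n)"
  by (metis finite_imageI fol_take)

lemma fol_card_mono: "finite (factors_of_length y (Suc n)) \<Longrightarrow>
   card (factors_of_length y n) \<le> card (factors_of_length y (Suc n))"
  by (metis card_image_le fol_take)

lemma MH:
  assumes fin: "finite (factors_of_length y (Suc n))"
    and le: "card (factors_of_length y (Suc n)) \<le> card (factors_of_length y n)"
  shows "\<exists>N P. P > 0 \<and> (\<forall>s\<ge>N. y (s+P) = y s)"
proof -
  let ?F = "factors_of_length y"
  have "card (take n ` ?F (Suc n)) = card (?F (Suc n))"
    using fol_card_mono[OF fin] le by (simp add: fol_take)
  then have inj: "inj_on (take n) (?F (Suc n))"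
    using eq_card_imp_inj_on fin by blast
  have key: "y (i+n) = y (j+n)" if "factor y i n = factor y j n" for i j
  proof -
    have "take n (factor y i (Suc n)) = take n (factor y j (Suc n))"
      using that by (simp add: take_factor)
    then have "factor y i (Suc n) = factor y j (Suc n)"
      by (rule inj_onD[OF inj]) (auto simp: mem_fol)
    then show ?thesis by (simp add: factor_Suc_snoc)
  qed
  have finn: "finite (?F n)" using fol_finite_down[OF fin] .
  have "\<not> inj_on (\<lambda>i. factor y i n) {..card (?F n)}"
  proof
    assume "inj_on (\<lambda>i. factor y i n) {..card (?F n)}"
    then have "card ((\<lambda>i. factor y i n) ` {..card (?F n)}) = Suc (card (?F n))"
      by (simp add: card_image)
    moreover have "(\<lambda>i. factor y i n) ` {..card (?F n)} \<subseteq> ?F n" by (auto simp: mem_fol)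
    ultimately have "Suc (card (?F n)) \<le> card (?F n)" using card_mono[OF finn] by metis
    then show False by simp
  qed
  then obtain i j where ij: "i \<noteq> j" "factor y i n = factor y j n"
    by (auto simp: inj_on_def)
  then obtain i j where ij: "i < j" "factor y i n = factor y j n"
    by (metis linorder_neqE_nat)
  have step: "factor y (i+t) n = factor y (j+t) n" for t
  proof (induction t)
    case 0 then show ?case using ij by simp
  next
    case (Suc t)
    have "y (i+t+n) = y (j+t+n)" using key[OF Suc] .
    then have "factor y (i+t) (Suc n) = factor y (j+t) (Suc n)"
      using Suc by (simp add: factor_Suc_snoc)
    then have "drop 1 (factor y (i+t) (Suc n)) = drop 1 (factor y (j+t) (Suc n))" by simp
    then show ?case by (simp add: drop_factor)
  qed
  have "\<forall>s\<ge>i+n. y (s + (j-i)) = y s"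
  proof (intro allI impI)
    fix s assume "s \<ge> i+n"
    then obtain t where t: "s = i + t + n" by (metis add.commute le_iff_add add.assoc)
    have "y (i+t+n) = y (j+t+n)" using key[OF step[of t]] .
    then show "y (s + (j-i)) = y s" using t ij(1) by (simp add: algebra_simps)
  qed
  then show ?thesis using ij(1) by (intro exI[of _ "i+n"] exI[of _ "j-i"]) auto
qed

lemma evper_fol:
  assumes P: "P > 0" and per: "\<forall>s\<ge>N. y (s+P) = y s"
  shows "factors_of_length y n \<subseteq> (\<lambda>i. factor y i n) ` {..<N+P}"
proof -
  have shift: "factor y (i'+P) n = factor y i' n" if "i' \<ge> N" for i'
    unfolding factor_eq_iff
  proof (intro allI impI)
    fix t assume "t < n"
    have "y ((i'+t) + P) = y (i'+t)" using per that by simp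
    moreover have "i'+P+t = i'+t+P" by simp
    ultimately show "y (i'+P+t) = y (i'+t)" by (simp add: ac_simps)
  qed
  have "\<exists>i'<N+P. factor y i n = factor y i' n" for i
  proof (induction i rule: less_induct)
    case (less i)
    show ?case
    proof (cases "i < N+P")
      case True then show ?thesis by blast
    next
      case False
      define i' where "i' = i - P"
      have ii: "i = i' + P" using False by (simp add: i'_def)
      have "factor y i n = factor y i' n" using shift[of i'] False ii by simp
      moreover have "\<exists>i''<N+P. factor y i' n = factor y i'' n" using less[of i'] P ii by simp
      ultimately show ?thesis by auto
    qed
  qed
  note H = this
  show ?thesis
  proof
    fix u assume "u \<in> factors_of_length y n"
    then obtain i where i: "factor y i n = u" by (auto simp: mem_fol)
    obtain i' where "i' < N+P" "factor y i n = factor y i' n" using H[of i] by blast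
    then show "u \<in> (\<lambda>i. factor y i n) ` {..<N+P}" using i by auto
  qed
qed

lemma evper_card:
  assumes P: "P > 0" and per: "\<forall>s\<ge>N. y (s+P) = y s"
  shows "finite (factors_of_length y n) \<and> card (factors_of_length y n) \<le> N+P"
proof -
  let ?I = "(\<lambda>i. factor y i n) ` {..<N+P}"
  have fi: "finite ?I" by simp
  have "card ?I \<le> N+P" using card_image_le[of "{..<N+P}" "\<lambda>i. factor y i n"] by simp
  then show ?thesis using evper_fol[OF assms, of n] fi
    by (meson card_mono finite_subset order_trans)
qed

lemma fol_0: "factors_of_length y 0 = {[]}"
  by (auto simp: mem_fol)

definition isf :: "(nat \<Rightarrow> 'a) \<Rightarrow> 'a list \<Rightarrow> bool" where
  "isf x u \<longleftrightarrow> (\<exists>i. factor x i (length u) = u)"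

definition RS :: "(nat \<Rightarrow> 'a) \<Rightarrow> 'a list \<Rightarrow> bool" where
  "RS x u \<longleftrightarrow> (\<exists>c1 c2. c1 \<noteq> c2 \<and> isf x (u@[c1]) \<and> isf x (u@[c2]))"

lemma isf_factor[simp]: "isf x (factor x i n)"
  by (auto simp: isf_def)

lemma mem_fol_isf: "u \<in> factors_of_length x n \<longleftrightarrow> length u = n \<and> isf x u"
  by (auto simp: mem_fol isf_def)

lemma factor_drop_eq: "factor x i (a+n) = factor x j (a+n) \<Longrightarrow> factor x (i+a) n = factor x (j+a) n"
  by (metis add_diff_cancel_left' drop_factor)

lemma isf_sub: "isf x (u @ v @ w) \<Longrightarrow> isf x v"
proof -
  assume "isf x (u @ v @ w)"
  then obtain i where i: "factor x i (length u + length v + length w) = u @ v @ w"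
    by (auto simp: isf_def add.assoc)
  have "factor x (i + length u) (length v) = v"
  proof -
    have "take (length v) (drop (length u) (factor x i (length u + length v + length w))) = v"
      using i by simp
    then show ?thesis by (simp add: drop_factor take_factor)
  qed
  then show "isf x v" by (auto simp: isf_def)
qed

lemma isf_prefix: "isf x (u @ w) \<Longrightarrow> isf x u"
  using isf_sub[of x "[]" u w] by simp

lemma isf_suffix: "isf x (u @ w) \<Longrightarrow> isf x w"
  using isf_sub[of x u w "[]"] by simp

locale sturm =
  fixes x :: "nat \<Rightarrow> 'a"
  assumes st: "sturmian x"
begin

abbreviation "F \<equiv> factors_of_length x"

lemma finF: "finite (F n)" and cardF: "card (F n) = n + 1"
  using st by (auto simp: sturmian_def)

lemma not_evper: "P > 0 \<Longrightarrow> \<forall>s\<ge>N. x (s+P) = x s \<Longrightarrow> False"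
  using evper_card[of P N x "N+P"] cardF[of "N+P"] by simp

lemma recur0: "\<exists>q\<ge>1. factor x q n = factor x 0 n"
proof (rule ccontr)
  assume H: "\<not> (\<exists>q\<ge>1. factor x q n = factor x 0 n)"
  define y where "y = (\<lambda>s. x (Suc s))"
  have fy: "factor y i k = factor x (Suc i) k" for i k
    by (simp add: y_def list_eq_iff_nth_eq)
  have sub: "factors_of_length y k \<subseteq> F k" for k
    by (auto simp: mem_fol fy)
  have finy: "finite (factors_of_length y k)" for k
    using finite_subset[OF sub finF] .
  have "factors_of_length y n \<subseteq> F n - {factor x 0 n}"
    using H by (auto simp: mem_fol fy)
  moreover have "card (F n - {factor x 0 n}) = n"
  proof -
    have "factor x 0 n \<in> F n" by (auto simp: mem_fol)
    then show ?thesis using finF cardF by (simp add: card_Diff_singleton)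
  qed
  ultimately have cn: "card (factors_of_length y n) \<le> n"
    using card_mono[of "F n - {factor x 0 n}"] finF by (metis finite_Diff)
  have "\<exists>k<n. card (factors_of_length y (Suc k)) \<le> card (factors_of_length y k)"
  proof (rule ccontr)
    assume "\<not> ?thesis"
    then have inc: "\<forall>k<n. card (factors_of_length y k) < card (factors_of_length y (Suc k))"
      by auto
    have "k \<le> n \<Longrightarrow> card (factors_of_length y k) \<ge> k + 1" for k
    proof (induction k)
      case 0 then show ?case by (simp add: fol_0)
    next
      case (Suc k) then show ?case using inc[rule_format, of k] by simp
    qed
    then show False using cn by fastforce
  qed
  then obtain k where "card (factors_of_length y (Suc k)) \<le> card (factors_of_length y k)"
    by blast
  then obtain N P where NP: "P > 0" "\<forall>s\<ge>N. y (s+P) = y s"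
    using MH[OF finy] by blast
  have "\<forall>s\<ge>Suc N. x (s+P) = x s"
  proof (intro allI impI)
    fix s assume "s \<ge> Suc N"
    then obtain s' where "s = Suc s'" "s' \<ge> N" by (cases s) auto
    then show "x (s+P) = x s" using NP(2) by (simp add: y_def)
  qed
  then show False using not_evper NP(1) by blast
qed

lemma recur_prefix: "\<exists>q\<ge>N. factor x q n = factor x 0 n"
proof (induction N)
  case 0 then show ?case by blast
next
  case (Suc N)
  then obtain q where q: "q \<ge> N" "factor x q n = factor x 0 n" by blast
  obtain q' where q': "q' \<ge> 1" "factor x q' (q+n) = factor x 0 (q+n)" using recur0 by blast
  have "factor x (q'+q) n = factor x q n"
    using factor_drop_eq[OF q'(2)] by simp
  then show ?case using q q' by (intro exI[of _ "q'+q"]) auto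
qed

lemma recur: "\<exists>q\<ge>N. factor x q n = factor x i n"
proof -
  obtain q where q: "q \<ge> N" "factor x q (i+n) = factor x 0 (i+n)" using recur_prefix by blast
  have "factor x (q+i) n = factor x i n" using factor_drop_eq[OF q(2)] by simp
  then show ?thesis using q by (intro exI[of _ "q+i"]) auto
qed

lemma recur_isf: "isf x u \<Longrightarrow> \<exists>q\<ge>N. factor x q (length u) = u"
  unfolding isf_def using recur by metis

lemma binary: "\<exists>a b. a \<noteq> b \<and> (\<forall>s. x s = a \<or> x s = b)"
proof -
  have "card (F 1) = 2" using cardF[of 1] by simp
  then obtain u v where uv: "F 1 = {u, v}" "u \<noteq> v" by (auto simp: card_2_iff)
  have f1: "factor x s 1 = [x s]" for s by (simp add: factor_def)
  have "u \<in> F 1" "v \<in> F 1" using uv by auto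
  then obtain i j where "factor x i 1 = u" "factor x j 1 = v" by (auto simp: mem_fol)
  then have ij: "u = [x i]" "v = [x j]" using f1 by auto
  have "[x s] \<in> F 1" for s using f1 by (metis mem_fol)
  then have "x s = x i \<or> x s = x j" for s using uv ij by auto
  then show ?thesis using uv ij by (intro exI[of _ "x i"] exI[of _ "x j"]) auto
qed

lemma RS_unique:
  assumes "length u = length v" "isf x u" "isf x v" "RS x u" "RS x v"
  shows "u = v"
proof (rule ccontr)
  assume uv: "u \<noteq> v"
  let ?n = "length u"
  obtain c1 c2 where c: "c1 \<noteq> c2" "isf x (u@[c1])" "isf x (u@[c2])" using assms(4) by (auto simp: RS_def)
  obtain d1 d2 where d: "d1 \<noteq> d2" "isf x (v@[d1])" "isf x (v@[d2])" using assms(5) by (auto simp: RS_def)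
  let ?A = "F (Suc ?n) - {u@[c2], v@[d2]}"
  have "F ?n \<subseteq> take ?n ` ?A"
  proof
    fix z assume z: "z \<in> F ?n"
    show "z \<in> take ?n ` ?A"
    proof (cases "z = u")
      case True
      have "u@[c1] \<in> ?A" using c d uv assms(1) by (auto simp: mem_fol_isf)
      then show ?thesis using True by force
    next
      case False
      note zu = False
      show ?thesis
      proof (cases "z = v")
        case True
        have "v@[d1] \<in> ?A" using c d uv assms(1) by (auto simp: mem_fol_isf)
        then show ?thesis using True assms(1) by force
      next
        case False
        obtain i where "factor x i ?n = z" using z by (auto simp: mem_fol)
        then have "z @ [x (i + ?n)] \<in> F (Suc ?n)"
          by (metis factor_Suc_snoc mem_fol)
        moreover have "z @ [x (i + ?n)] \<noteq> u@[c2]" "z @ [x (i + ?n)] \<noteq> v@[d2]"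
          using zu False by auto
        ultimately have "z @ [x (i + ?n)] \<in> ?A" by blast
        moreover have "take ?n (z @ [x (i + ?n)]) = z" using z by (simp add: mem_fol_isf)
        ultimately show ?thesis by (metis image_eqI)
      qed
    qed
  qed
  then have "card (F ?n) \<le> card ?A"
    by (meson card_image_le card_mono finite_Diff finF finite_imageI order_trans)
  moreover have "u@[c2] \<in> F (Suc ?n)" "v@[d2] \<in> F (Suc ?n)"
    using c d assms(1) by (auto simp: mem_fol_isf)
  moreover have "u@[c2] \<noteq> v@[d2]" using uv by auto
  ultimately have "card (F ?n) \<le> card (F (Suc ?n)) - 2"
    using finF by (simp add: card_Diff_subset)
  then show False using cardF[of ?n] cardF[of "Suc ?n"] by simp
qed

lemma RS_exists: "\<exists>u. length u = n \<and> isf x u \<and> RS x u"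
proof (rule ccontr)
  assume H: "\<not> ?thesis"
  have "inj_on (take n) (F (Suc n))"
  proof (rule inj_onI)
    fix z1 z2 assume z: "z1 \<in> F (Suc n)" "z2 \<in> F (Suc n)" "take n z1 = take n z2"
    obtain i1 where i1: "z1 = factor x i1 n @ [x (i1+n)]" using z(1) by (auto simp: mem_fol factor_Suc_snoc)
    obtain i2 where i2: "z2 = factor x i2 n @ [x (i2+n)]" using z(2) by (auto simp: mem_fol factor_Suc_snoc)
    have eq: "factor x i1 n = factor x i2 n" using z(3) i1 i2 by simp
    show "z1 = z2"
    proof (rule ccontr)
      assume "z1 \<noteq> z2"
      then have "x (i1+n) \<noteq> x (i2+n)" using i1 i2 eq by auto
      moreover have "isf x (factor x i1 n @ [x (i1+n)])" "isf x (factor x i1 n @ [x (i2+n)])"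
        using eq by (metis factor_Suc_snoc isf_factor)+
      ultimately have "RS x (factor x i1 n)" unfolding RS_def by blast
      then show False using H by fastforce
    qed
  qed
  then have "card (F (Suc n)) = card (F n)" using card_image fol_take by metis
  then show False using cardF by simp
qed

lemma RS_suffix: "RS x (c # u) \<Longrightarrow> RS x u"
  unfolding RS_def using isf_suffix[of x "[c]"] by auto

end

lemma factor_Suc_tl: "n > 0 \<Longrightarrow> factor x (Suc i) n = tl (factor x i n) @ [x (i+n)]"
proof (cases n)
  case (Suc n')
  have "factor x i n = x i # factor x (Suc i) n'" using Suc by (simp only: factor_Suc_cons)
  moreover have "factor x (Suc i) n = factor x (Suc i) n' @ [x (Suc i + n')]" using Suc by (simp only: factor_Suc_snoc)
  ultimately show ?thesis using Suc by simp
qed simp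

context sturm
begin

definition cntb :: "'a \<Rightarrow> nat \<Rightarrow> nat \<Rightarrow> nat" where
  "cntb c i n = (\<Sum>s\<in>{i..<i+n}. if x s = c then 1 else 0)"

definition lcnt :: "'a \<Rightarrow> 'a list \<Rightarrow> nat" where
  "lcnt c u = length (filter (\<lambda>d. d = c) u)"

lemma cntb_Suc: "cntb c i (Suc n) = cntb c i n + (if x (i+n) = c then 1 else 0)"
  by (simp add: cntb_def)

lemma lcnt_factor: "lcnt c (factor x i n) = cntb c i n"
  by (induction n) (auto simp: lcnt_def cntb_def factor_Suc_snoc)

lemma lcnt_simps[simp]: "lcnt c [] = 0" "lcnt c (d # u) = (if d = c then 1 else 0) + lcnt c u"
  "lcnt c (u @ v) = lcnt c u + lcnt c v"
  by (auto simp: lcnt_def)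

lemma isf_letter: "isf x (u @ [c]) \<Longrightarrow> \<exists>s. x s = c"
proof -
  assume "isf x (u @ [c])"
  then have "isf x [c]" using isf_suffix by blast
  then obtain i where "factor x i 1 = [c]" by (auto simp: isf_def)
  then show ?thesis by (auto simp: factor_def)
qed

lemma core:
  assumes ab: "a \<noteq> b" and letters: "\<forall>s. x s = a \<or> x s = b"
    and A1: "isf x (a # w @ [a])" and B1: "isf x (b # w @ [b])"
    and RSA: "RS x (a # w)"
  shows False
proof -
  define m where "m = length w"
  define V where "V t = factor x t (Suc m)" for t
  define A where "A = a # w"
  define B where "B = b # w"
  have lenA: "length A = Suc m" and lenB: "length B = Suc m" by (auto simp: A_def B_def m_def)
  have isfA: "isf x A" using A1 isf_prefix[of x "a # w" "[a]"] by (simp add: A_def)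
  have isfB: "isf x B" using B1 isf_prefix[of x "b # w" "[b]"] by (simp add: B_def)
  have AB: "A \<noteq> B" using ab by (simp add: A_def B_def)
  have RSA': "RS x A" using RSA by (simp add: A_def)
  have Vlen: "length (V t) = Suc m" for t by (simp add: V_def)
  have Vext: "isf x (V t @ [x (t + Suc m)])" for t
    by (metis V_def factor_Suc_snoc isf_factor)
  have Vnext: "V (Suc t) = tl (V t) @ [x (t + Suc m)]" for t
    by (simp add: V_def factor_Suc_tl)
  have notBa: "\<not> isf x (B @ [a])"
  proof
    assume "isf x (B @ [a])"
    then have "RS x B" using B1 ab unfolding RS_def B_def by auto
    then have "B = A" using RS_unique[of B A] lenA lenB isfA isfB RSA' by simp
    then show False using AB by simp
  qed
  have VB: "x (t + Suc m) = b" if "V t = B" for t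
    using Vext[of t] that notBa letters by metis
  have det: "V (Suc t) = V (Suc t')" if "V t = V t'" "V t \<noteq> A" for t t'
  proof -
    have "x (t + Suc m) = x (t' + Suc m)"
    proof (rule ccontr)
      assume ne: "x (t + Suc m) \<noteq> x (t' + Suc m)"
      have "RS x (V t)" unfolding RS_def using ne Vext[of t] Vext[of t'] that(1) by metis
      then have "V t = A" using RS_unique[of "V t" A] lenA Vlen isfA RSA' by (simp add: V_def)
      then show False using that(2) by simp
    qed
    then show ?thesis using Vnext that(1) by simp
  qed
  have recA: "\<exists>q\<ge>N. V q = A" for N using recur_isf[OF isfA] lenA by (simp add: V_def)
  have nocycle: False if tt: "\<tau> < \<tau>'" "V \<tau> = V \<tau>'" "\<forall>\<sigma>. \<tau> \<le> \<sigma> \<and> \<sigma> < \<tau>' \<longrightarrow> V \<sigma> \<noteq> A" for \<tau> \<tau>'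
  proof -
    define P where "P = \<tau>' - \<tau>"
    have P: "P > 0" "\<tau>' = \<tau> + P" using tt(1) by (auto simp: P_def)
    have claim: "V (\<tau>+i) \<noteq> A \<and> V (\<tau>+i+P) = V (\<tau>+i)" for i
    proof (induction i rule: less_induct)
      case (less i)
      have n1: "V (\<tau>+i) \<noteq> A"
      proof (cases "i < P")
        case True then show ?thesis using tt(3) P by simp
      next
        case False
        then have "V (\<tau>+(i-P)+P) = V (\<tau>+(i-P))" "V (\<tau>+(i-P)) \<noteq> A" using less[of "i-P"] P by auto
        moreover have "\<tau>+(i-P)+P = \<tau>+i" using False by simp
        ultimately show ?thesis by simp
      qed
      have n2: "V (\<tau>+i+P) = V (\<tau>+i)"
      proof (cases i)
        case 0 then show ?thesis using tt(2) P by simp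
      next
        case (Suc i')
        then have "V (\<tau>+i'+P) = V (\<tau>+i')" "V (\<tau>+i') \<noteq> A" using less[of i'] by auto
        then have "V (Suc (\<tau>+i'+P)) = V (Suc (\<tau>+i'))" using det[of "\<tau>+i'+P" "\<tau>+i'"] by simp
        then show ?thesis using Suc by simp
      qed
      show ?case using n1 n2 by blast
    qed
    obtain q where q: "q \<ge> \<tau>" "V q = A" using recA by blast
    have "V (\<tau> + (q - \<tau>)) \<noteq> A" using claim by blast
    then show False using q by simp
  qed
  have lastA: "\<exists>p. \<tau>0 \<le> p \<and> p \<le> \<tau>0 + d \<and> V p = A \<and> (\<forall>\<sigma>. p < \<sigma> \<and> \<sigma> \<le> \<tau>0 + d \<longrightarrow> V \<sigma> \<noteq> A)"
    if "V \<tau>0 = A" for \<tau>0 d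
  proof (induction d)
    case 0 then show ?case using that by auto
  next
    case (Suc d)
    show ?case
    proof (cases "V (\<tau>0 + Suc d) = A")
      case True then show ?thesis by (intro exI[of _ "\<tau>0 + Suc d"]) auto
    next
      case False
      then show ?thesis using Suc by (metis add_Suc_right le_Suc_eq le_SucI)
    qed
  qed
  obtain t0 where t0: "V t0 = A" using recA by blast
  obtain t where t: "t \<ge> Suc t0" "V t = B"
    using recur_isf[OF isfB, of "Suc t0"] lenB by (auto simp: V_def)
  obtain p where p: "t0 \<le> p" "p \<le> t" "V p = A" "\<forall>\<sigma>. p < \<sigma> \<and> \<sigma> \<le> t \<longrightarrow> V \<sigma> \<noteq> A"
    using lastA[OF t0, of "t - t0"] t(1) by auto
  have pt: "p < t" using p(2,3) t(2) AB by (cases "p = t") auto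
  obtain q0 where q0: "q0 \<ge> Suc p" "V q0 = A" using recA by blast
  define e where "e = (LEAST q. q > p \<and> V q = A)"
  have e: "e > p" "V e = A" using LeastI[of "\<lambda>q. q > p \<and> V q = A" q0] q0 by (auto simp: e_def)
  have e2: "V \<sigma> \<noteq> A" if "p < \<sigma>" "\<sigma> < e" for \<sigma>
    using not_less_Least[of \<sigma> "\<lambda>q. q > p \<and> V q = A"] that by (auto simp: e_def)
  have te: "t < e"
  proof (rule ccontr)
    assume "\<not> t < e"
    then have "V e \<noteq> A" using p(4) e(1) by auto
    then show False using e(2) by simp
  qed
  have branch: "x (p + Suc m) = a"
  proof (rule ccontr)
    assume "x (p + Suc m) \<noteq> a"
    then have xb: "x (p + Suc m) = b" using letters by metis
    have "V (Suc p) = w @ [b]" using Vnext[of p] p(3) xb by (simp add: A_def)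
    moreover have "V (Suc t) = w @ [b]" using Vnext[of t] t(2) VB[OF t(2)] by (simp add: B_def)
    ultimately show False
      using nocycle[of "Suc p" "Suc t"] pt p(4) by auto
  qed
  have inj: "inj_on V {p..<e}"
  proof (rule inj_onI)
    fix s1 s2 assume s: "s1 \<in> {p..<e}" "s2 \<in> {p..<e}" "V s1 = V s2"
    show "s1 = s2"
    proof (rule ccontr)
      assume "s1 \<noteq> s2"
      then consider "s1 < s2" | "s2 < s1" by linarith
      then show False
      proof cases
        case 1
        show False
        proof (cases "s1 = p")
          case True then show False using s e2[of s2] p(3) 1 by auto
        next
          case False then show False using nocycle[of s1 s2] s 1 e2 by auto
        qed
      next
        case 2
        show False
        proof (cases "s2 = p")
          case True then show False using s e2[of s1] p(3) 2 by auto
        next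
          case False then show False using nocycle[of s2 s1] s 2 e2 by auto
        qed
      qed
    qed
  qed
  have track: "\<forall>i. Suc p' + i \<le> \<tau> \<longrightarrow> V (Suc p' + i) = V (s0 + i) \<and> s0 + i < e"
    if hyp: "V (Suc p') = V s0" "s0 \<le> e" "\<forall>\<sigma>. p' < \<sigma> \<and> \<sigma> \<le> \<tau> \<longrightarrow> V \<sigma> \<noteq> A" for p' \<tau> s0
  proof
    fix i show "Suc p' + i \<le> \<tau> \<longrightarrow> V (Suc p' + i) = V (s0 + i) \<and> s0 + i < e"
    proof (induction i)
      case 0
      show ?case
      proof
        assume a0: "Suc p' + 0 \<le> \<tau>"
        have "s0 \<noteq> e" using hyp a0 e(2) by force
        then show "V (Suc p' + 0) = V (s0 + 0) \<and> s0 + 0 < e" using hyp by simp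
      qed
    next
      case (Suc i)
      show ?case
      proof
        assume a1: "Suc p' + Suc i \<le> \<tau>"
        then have ih: "V (Suc p' + i) = V (s0 + i)" "s0 + i < e" using Suc by auto
        have "V (Suc p' + i) \<noteq> A" using hyp(3) a1 by auto
        then have eq: "V (Suc p' + Suc i) = V (s0 + Suc i)" using det[OF ih(1)] by simp
        have "V (Suc p' + Suc i) \<noteq> A" using hyp(3) a1 by auto
        then have "s0 + Suc i \<noteq> e" using eq e(2) by auto
        then show "V (Suc p' + Suc i) = V (s0 + Suc i) \<and> s0 + Suc i < e" using eq ih(2) by simp
      qed
    qed
  qed
  have cover: "F (Suc m) \<subseteq> V ` {p..<e}"
  proof
    fix u assume "u \<in> F (Suc m)"
    then obtain i where "factor x i (Suc m) = u" by (auto simp: mem_fol)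
    then obtain \<tau> where tau: "\<tau> \<ge> p" "V \<tau> = u" using recur[of p "Suc m" i] by (auto simp: V_def)
    obtain p' where p': "p \<le> p'" "p' \<le> \<tau>" "V p' = A" "\<forall>\<sigma>. p' < \<sigma> \<and> \<sigma> \<le> \<tau> \<longrightarrow> V \<sigma> \<noteq> A"
      using lastA[OF p(3), of "\<tau> - p"] tau(1) by auto
    show "u \<in> V ` {p..<e}"
    proof (cases "p' = \<tau>")
      case True
      then have "u = V p" using tau p' p(3) by simp
      then show ?thesis using e(1) by auto
    next
      case False
      then have pt': "Suc p' \<le> \<tau>" using p' by simp
      obtain s0 where s0: "V (Suc p') = V s0" "p < s0" "s0 \<le> e"
      proof (cases "x (p' + Suc m) = a")
        case True
        have "V (Suc p') = V (Suc p)" using Vnext[of p'] Vnext[of p] True branch p'(3) p(3) by simp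
        then show ?thesis using that e(1) by (metis Suc_leI lessI)
      next
        case False
        then have xb: "x (p' + Suc m) = b" using letters by metis
        have "V (Suc p') = V (Suc t)" using Vnext[of p'] Vnext[of t] xb VB[OF t(2)] p'(3) t(2)
          by (simp add: A_def B_def)
        then show ?thesis using that te pt by (metis Suc_leI less_SucI)
      qed
      have "V (Suc p' + (\<tau> - Suc p')) = V (s0 + (\<tau> - Suc p')) \<and> s0 + (\<tau> - Suc p') < e"
        using track[OF s0(1) s0(3) p'(4), rule_format, of "\<tau> - Suc p'"] pt' by simp
      then show ?thesis using pt' tau(2) s0(2) by (auto intro!: image_eqI[of _ _ "s0 + (\<tau> - Suc p')"])
    qed
  qed
  have img: "V ` {p..<e} \<subseteq> F (Suc m)" by (auto simp: V_def mem_fol)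
  have "card (V ` {p..<e}) = e - p" using inj by (simp add: card_image)
  moreover have "V ` {p..<e} = F (Suc m)" using cover img by blast
  ultimately have "e - p = Suc (Suc m)" using cardF[of "Suc m"] by simp
  then have eq_e: "e = p + Suc (Suc m)" using e(1) by simp
  define r where "r = t - p"
  have r: "1 \<le> r" "r \<le> Suc m" "t = p + r" using pt te eq_e by (auto simp: r_def)
  let ?f = "\<lambda>s. if x s = b then 1 else (0::nat)"
  have cB: "cntb b t (Suc m) = lcnt b w + 1"
    using lcnt_factor[of b t "Suc m"] t(2) by (simp add: V_def B_def)
  have cA: "cntb b p (Suc m) = lcnt b w"
    using lcnt_factor[of b p "Suc m"] p(3) ab by (simp add: V_def A_def)
  have per: "x (p + Suc (Suc m) + i) = x (p + i)" if "i < Suc m" for i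
    using e(2) p(3) that unfolding eq_e V_def A_def by (metis factor_nth)
  have "cntb b t (Suc m) = sum ?f {p+r..<p+r+Suc m}" by (simp add: cntb_def r(3))
  also have "\<dots> = sum ?f {p+r..<p+Suc m} + sum ?f {p+Suc m..<p+Suc (Suc m)} + sum ?f {p+Suc (Suc m)..<p+r+Suc m}"
  proof -
    have i1: "sum ?f {p+r..<p+Suc m} + sum ?f {p+Suc m..<p+r+Suc m} = sum ?f {p+r..<p+r+Suc m}"
      by (rule sum.atLeastLessThan_concat) (use r in auto)
    have i2: "sum ?f {p+Suc m..<p+Suc (Suc m)} + sum ?f {p+Suc (Suc m)..<p+r+Suc m} = sum ?f {p+Suc m..<p+r+Suc m}"
      by (rule sum.atLeastLessThan_concat) (use r in auto)
    show ?thesis using i1 i2 by linarith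
  qed
  also have "sum ?f {p+Suc m..<p+Suc (Suc m)} = 0" using branch ab by simp
  also have "sum ?f {p+Suc (Suc m)..<p+r+Suc m} = sum (\<lambda>i. ?f (p + Suc (Suc m) + i)) {0..<r-1}"
  proof -
    have "{p+Suc (Suc m)..<p+r+Suc m} = {0+(p+Suc (Suc m))..<(r-1)+(p+Suc (Suc m))}"
      using r by (simp add: ac_simps)
    then have "sum ?f {p+Suc (Suc m)..<p+r+Suc m} = sum (\<lambda>i. ?f (i + (p+Suc (Suc m)))) {0..<r-1}"
      by (simp only: sum.shift_bounds_nat_ivl)
    then show ?thesis by (simp add: add.commute)
  qed
  also have "\<dots> = sum (\<lambda>i. ?f (p + i)) {0..<r-1}"
    using per r by (intro sum.cong) auto
  also have "\<dots> = sum ?f {p..<p+(r-1)}"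
  proof -
    have "{p..<p+(r-1)} = {0+p..<(r-1)+p}" by (simp add: ac_simps)
    then have "sum ?f {p..<p+(r-1)} = sum (\<lambda>i. ?f (i + p)) {0..<r-1}"
      by (simp only: sum.shift_bounds_nat_ivl)
    then show ?thesis by (simp add: add.commute)
  qed
  finally have c1: "cntb b t (Suc m) = sum ?f {p+r..<p+Suc m} + sum ?f {p..<p+(r-1)}" by simp
  have "cntb b p (Suc m) = sum ?f {p..<p+(r-1)} + sum ?f {p+(r-1)..<p+r} + sum ?f {p+r..<p+Suc m}"
  proof -
    have i1: "sum ?f {p..<p+(r-1)} + sum ?f {p+(r-1)..<p+Suc m} = sum ?f {p..<p+Suc m}"
      by (rule sum.atLeastLessThan_concat) (use r in auto)
    have i2: "sum ?f {p+(r-1)..<p+r} + sum ?f {p+r..<p+Suc m} = sum ?f {p+(r-1)..<p+Suc m}"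
      by (rule sum.atLeastLessThan_concat) (use r in auto)
    show ?thesis using i1 i2 unfolding cntb_def by linarith
  qed
  then have "cntb b t (Suc m) \<le> cntb b p (Suc m)" using c1 by simp
  then show False using cA cB by simp
qed

end

context sturm
begin

lemma cntb_cons: "cntb c i (Suc n) = (if x i = c then 1 else 0) + cntb c (Suc i) n"
proof -
  have "{i..<i + Suc n} = insert i {Suc i..<Suc i + n}" by auto
  then show ?thesis by (simp add: cntb_def)
qed

lemma cntb_add: "cntb c i (n1 + n2) = cntb c i n1 + cntb c (i+n1) n2"
proof -
  have "sum (\<lambda>s. if x s = c then 1 else (0::nat)) {i..<i+n1} + sum (\<lambda>s. if x s = c then 1 else 0) {i+n1..<i+(n1+n2)}
      = sum (\<lambda>s. if x s = c then 1 else 0) {i..<i+(n1+n2)}"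
    by (rule sum.atLeastLessThan_concat) auto
  then show ?thesis by (simp add: cntb_def add.assoc)
qed

lemma balanced_aux:
  assumes ab: "a \<noteq> b" and letters: "\<forall>s. x s = a \<or> x s = b"
  shows "cntb b p n \<le> cntb b q n + 1"
proof (rule ccontr)
  assume "\<not> ?thesis"
  then have "cntb b p n \<ge> cntb b q n + 2" by linarith
  then have ex: "\<exists>n p q. cntb b p n \<ge> cntb b q n + 2" by blast
  define n0 where "n0 = (LEAST n. \<exists>p q. cntb b p n \<ge> cntb b q n + 2)"
  have n0: "\<exists>p q. cntb b p n0 \<ge> cntb b q n0 + 2"
    using LeastI_ex[OF ex] by (simp add: n0_def)
  have minn: "cntb b p' n' \<le> cntb b q' n' + 1" if "n' < n0" for n' p' q'
  proof -
    have "\<not> (\<exists>p q. cntb b p n' \<ge> cntb b q n' + 2)"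
      using not_less_Least[of n' "\<lambda>n. \<exists>p q. cntb b p n \<ge> cntb b q n + 2"] that
      unfolding n0_def by blast
    then have "\<not> cntb b p' n' \<ge> cntb b q' n' + 2" by blast
    then show ?thesis by linarith
  qed
  obtain p q where pq: "cntb b p n0 \<ge> cntb b q n0 + 2" using n0 by blast
  let ?i = "\<lambda>s. if x s = b then 1 else (0::nat)"
  have "n0 \<noteq> 0"
  proof
    assume "n0 = 0" then show False using pq by (simp add: cntb_def)
  qed
  then obtain n1 where n1: "n0 = Suc n1" by (cases n0) auto
  have e1: "cntb b p n0 = ?i p + cntb b (Suc p) n1" "cntb b q n0 = ?i q + cntb b (Suc q) n1"
    using cntb_cons n1 by auto
  have "cntb b (Suc p) n1 \<le> cntb b (Suc q) n1 + 1" using minn n1 by simp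
  then have fi: "?i p = 1" "?i q = 0" using pq e1 by (auto split: if_splits)
  then have first: "x p = b" "x q = a" using letters by (auto split: if_splits)
  have "n1 \<noteq> 0"
  proof
    assume "n1 = 0" then show False using pq e1 fi by (simp add: cntb_def)
  qed
  then obtain m where m: "n1 = Suc m" by (cases n1) auto
  have e2: "cntb b p n0 = cntb b p (Suc m) + ?i (p + Suc m)" "cntb b q n0 = cntb b q (Suc m) + ?i (q + Suc m)"
    using cntb_Suc n1 m by auto
  have "cntb b p (Suc m) \<le> cntb b q (Suc m) + 1" using minn n1 m by simp
  then have la: "?i (p + Suc m) = 1" "?i (q + Suc m) = 0" using pq e2 by (auto split: if_splits)
  then have last: "x (p + Suc m) = b" "x (q + Suc m) = a" using letters by (auto split: if_splits)
  have mid: "x (Suc p + i) = x (Suc q + i)" if "i < m" for i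
    using that
  proof (induction i rule: less_induct)
    case (less i)
    have cnteq: "cntb b (Suc p) i' = cntb b (Suc q) i'" if "i' \<le> i" for i'
      using that
    proof (induction i')
      case 0 then show ?case by (simp add: cntb_def)
    next
      case (Suc i')
      then have "x (Suc p + i') = x (Suc q + i')" using less.IH less.prems by simp
      then show ?case using Suc by (simp add: cntb_Suc)
    qed
    show ?case
    proof (rule ccontr)
      assume ne: "x (Suc p + i) \<noteq> x (Suc q + i)"
      have cp: "cntb b p (Suc (Suc i)) = 1 + cntb b (Suc p) i + ?i (Suc p + i)"
        using cntb_cons[of b p "Suc i"] cntb_Suc[of b "Suc p" i] first by simp
      have cq: "cntb b q (Suc (Suc i)) = cntb b (Suc q) i + ?i (Suc q + i)"
        using cntb_cons[of b q "Suc i"] cntb_Suc[of b "Suc q" i] first ab by simp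
      have ci: "cntb b (Suc p) i = cntb b (Suc q) i" using cnteq by simp
      consider "x (Suc p + i) = b" "x (Suc q + i) = a" | "x (Suc p + i) = a" "x (Suc q + i) = b"
        using ne letters by metis
      then show False
      proof cases
        case 1
        then have "cntb b p (Suc (Suc i)) = cntb b q (Suc (Suc i)) + 2" using cp cq ci ab by simp
        moreover have "Suc (Suc i) < n0" using less.prems n1 m by simp
        ultimately show False using minn[of "Suc (Suc i)" p q] by simp
      next
        case 2
        then have eqc: "cntb b p (Suc (Suc i)) = cntb b q (Suc (Suc i))" using cp cq ci ab by simp
        define r where "r = n0 - Suc (Suc i)"
        have nr: "n0 = Suc (Suc i) + r" using less.prems n1 m by (simp add: r_def)
        have "cntb b p n0 = cntb b p (Suc (Suc i)) + cntb b (p + Suc (Suc i)) r"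
             "cntb b q n0 = cntb b q (Suc (Suc i)) + cntb b (q + Suc (Suc i)) r"
          using nr cntb_add by metis+
        then have "cntb b (p + Suc (Suc i)) r \<ge> cntb b (q + Suc (Suc i)) r + 2" using pq eqc by simp
        moreover have "r < n0" using nr by simp
        ultimately show False using minn[of r "p + Suc (Suc i)" "q + Suc (Suc i)"] by simp
      qed
    qed
  qed
  define w where "w = factor x (Suc p) m"
  have split: "factor x i n0 = x i # factor x (Suc i) m @ [x (i + Suc m)]" for i
  proof -
    have "factor x i n0 = x i # factor x (Suc i) (Suc m)" using n1 m by (simp only: factor_Suc_cons)
    moreover have "factor x (Suc i) (Suc m) = factor x (Suc i) m @ [x (Suc i + m)]" by (simp only: factor_Suc_snoc)
    ultimately show ?thesis by simp
  qed
  have fp: "factor x p n0 = b # w @ [b]"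
    using first last split[of p] by (simp add: w_def)
  have wq: "factor x (Suc q) m = w" using mid by (simp add: w_def factor_eq_iff)
  have fq: "factor x q n0 = a # w @ [a]"
    using first last split[of q] wq by simp
  have Bb: "isf x (b # w @ [b])" and Aa: "isf x (a # w @ [a])"
    using fp fq isf_factor by metis+
  obtain u where u: "length u = Suc m" "isf x u" "RS x u" using RS_exists by blast
  then obtain c u' where cu: "u = c # u'" by (cases u) auto
  have u': "RS x u'" "isf x u'" "length u' = m" using u cu RS_suffix isf_suffix[of x "[c]" u'] by auto
  have wa: "isf x (w @ [a])" using Aa isf_sub[of x "[a]" "w @ [a]" "[]"] by simp
  have wb: "isf x (w @ [b])" using Bb isf_sub[of x "[b]" "w @ [b]" "[]"] by simp
  have RSw: "RS x w" using wa wb ab unfolding RS_def by blast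
  have lw: "length w = m" by (simp add: w_def)
  have "u' = w" using RS_unique[of u' w] u' RSw lw isf_prefix[OF wa] by simp
  then have RSc: "RS x (c # w)" using u cu by simp
  have "isf x [c]" using u cu isf_prefix[of x "[c]" u'] by simp
  then obtain s where "factor x s 1 = [c]" by (auto simp: isf_def)
  then have "x s = c" by (simp add: factor_def)
  then consider "c = a" | "c = b" using letters by metis
  then show False
  proof cases
    case 1 then show False using core[OF ab letters Aa Bb] RSc by simp
  next
    case 2
    have l2: "\<forall>s. x s = b \<or> x s = a" using letters by metis
    show False using core[OF ab[symmetric] l2 Bb Aa] RSc 2 by simp
  qed
qed

lemma balanced:
  assumes ab: "a \<noteq> b" and letters: "\<forall>s. x s = a \<or> x s = b"
  shows "cntb b p n \<le> cntb b q n + 1"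
  using balanced_aux[OF assms] .

end

lemma density:
  fixes \<theta> \<epsilon> :: real
  assumes irr: "\<theta> \<notin> \<rat>" and ep: "\<epsilon> > 0" "\<epsilon> \<le> 1"
  shows "\<exists>M::nat. \<forall>c u. 0 \<le> u \<longrightarrow> u + \<epsilon> \<le> 1 \<longrightarrow>
           (\<exists>t\<le>M. u < frac (c + real t * \<theta>) \<and> frac (c + real t * \<theta>) < u + \<epsilon>)"
proof -
  obtain q where q: "q > 0" "\<bar>frac (real q * \<theta>) - \<epsilon>/2\<bar> < \<epsilon>/2"
    using Kronecker_approx_1_explicit[OF irr, of "\<epsilon>/2" "\<epsilon>/2"] ep by auto
  define \<delta> where "\<delta> = frac (real q * \<theta>)"
  have d: "0 < \<delta>" "\<delta> < \<epsilon>" using q(2) unfolding \<delta>_def abs_less_iff by linarith+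
  define M where "M = q * (nat \<lceil>1/\<delta>\<rceil> + 1)"
  have "\<forall>c u. 0 \<le> u \<longrightarrow> u + \<epsilon> \<le> 1 \<longrightarrow>
           (\<exists>t\<le>M. u < frac (c + real t * \<theta>) \<and> frac (c + real t * \<theta>) < u + \<epsilon>)"
  proof (intro allI impI)
    fix c u :: real assume u: "0 \<le> u" "u + \<epsilon> \<le> 1"
    define x0 where "x0 = frac c"
    have x0: "0 \<le> x0" "x0 < 1" by (auto simp: x0_def frac_lt_1)
    define T where "T = (if x0 \<le> u then u else u + 1)"
    have T: "0 \<le> T - x0" "T - x0 \<le> 1" using x0 u d by (auto simp: T_def)
    define z where "z = (T - x0) / \<delta>"
    have z: "0 \<le> z" "z \<le> 1/\<delta>" using T d by (auto simp: z_def divide_right_mono)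
    define j where "j = nat \<lfloor>z\<rfloor> + 1"
    have rj: "real j = of_int \<lfloor>z\<rfloor> + 1" using z by (simp add: j_def)
    have jz: "z < real j" "real j \<le> z + 1" using rj by linarith+
    have jd1: "T - x0 < real j * \<delta>"
    proof -
      have "T - x0 = z * \<delta>" using d by (simp add: z_def)
      also have "\<dots> < real j * \<delta>" using jz d by simp
      finally show ?thesis .
    qed
    have jd2: "real j * \<delta> \<le> T - x0 + \<delta>"
    proof -
      have "real j * \<delta> \<le> (z + 1) * \<delta>" using jz d by (simp add: mult_right_mono)
      also have "\<dots> = T - x0 + \<delta>" using d by (simp add: z_def distrib_right)
      finally show ?thesis .
    qed
    have jM: "j \<le> nat \<lceil>1/\<delta>\<rceil> + 1"
    proof -
      have "\<lfloor>z\<rfloor> \<le> \<lceil>1/\<delta>\<rceil>" using z by (meson floor_le_ceiling le_ceiling_iff order_trans floor_le_iff ceiling_mono less_imp_le)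
      then show ?thesis using z by (simp add: j_def nat_mono)
    qed
    define t where "t = j * q"
    have tM: "t \<le> M" unfolding t_def M_def using mult_le_mono1[OF jM, of q] by (simp add: mult.commute)
    have "c + real t * \<theta> = (x0 + real j * \<delta>) + of_int (\<lfloor>c\<rfloor> + int j * \<lfloor>real q * \<theta>\<rfloor>)"
      by (simp add: t_def x0_def \<delta>_def frac_def algebra_simps)
    then have fr: "frac (c + real t * \<theta>) = frac (x0 + real j * \<delta>)"
      by (simp only: frac_add_of_int_right)
    have "u < frac (x0 + real j * \<delta>) \<and> frac (x0 + real j * \<delta>) < u + \<epsilon>"
    proof (cases "x0 \<le> u")
      case True
      then have "x0 + real j * \<delta> \<in> {0..<1}" "u < x0 + real j * \<delta>" "x0 + real j * \<delta> < u + \<epsilon>"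
        using jd1 jd2 d u x0 by (auto simp: T_def)
      then show ?thesis by simp
    next
      case False
      have h: "u + 1 < x0 + real j * \<delta>" "x0 + real j * \<delta> \<le> u + 1 + \<delta>"
        using jd1 jd2 False by (auto simp: T_def)
      have "frac (x0 + real j * \<delta>) = x0 + real j * \<delta> - 1"
        using h d u by (subst frac_unique_iff) auto
      then show ?thesis using h d by simp
    qed
    then show "\<exists>t\<le>M. u < frac (c + real t * \<theta>) \<and> frac (c + real t * \<theta>) < u + \<epsilon>"
      using fr tM by metis
  qed
  then show ?thesis by blast
qed

locale sturm2 = sturm x for x :: "nat \<Rightarrow> 'a" +
  fixes a b :: 'a
  assumes ab: "a \<noteq> b" and letters: "\<forall>s. x s = a \<or> x s = b"
begin

lemma bal: "cntb b p n \<le> cntb b q n + 1"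
  using balanced[OF ab letters] .

lemma blocks: "cntb b s (k*n) = (\<Sum>i<k. cntb b (s + i*n) n)"
proof (induction k)
  case 0 then show ?case by (simp add: cntb_def)
next
  case (Suc k)
  have "cntb b s (Suc k * n) = cntb b s (k*n + n)" by (simp add: add.commute)
  also have "\<dots> = cntb b s (k*n) + cntb b (s + k*n) n" by (rule cntb_add)
  finally show ?case using Suc by simp
qed

lemma cross: "n * cntb b q n' \<le> n' * cntb b p n + n + n'"
proof -
  have "n * cntb b q n' = (\<Sum>i<n. cntb b q n')" by simp
  also have "\<dots> \<le> (\<Sum>i<n. cntb b (0 + i*n') n' + 1)" using bal by (intro sum_mono) simp
  also have "\<dots> = (\<Sum>i<n. cntb b (0 + i*n') n') + (\<Sum>i<n. 1)" by (rule sum.distrib)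
  also have "\<dots> = cntb b 0 (n*n') + n" by (simp only: blocks[symmetric]) simp
  finally have A: "n * cntb b q n' \<le> cntb b 0 (n*n') + n" .
  have "cntb b 0 (n'*n) = (\<Sum>i<n'. cntb b (0 + i*n) n)" by (rule blocks)
  also have "\<dots> \<le> (\<Sum>i<n'. cntb b p n + 1)" using bal by (intro sum_mono) simp
  also have "\<dots> = n' * cntb b p n + n'" by (simp add: algebra_simps)
  finally have B: "cntb b 0 (n'*n) \<le> n' * cntb b p n + n'" .
  show ?thesis using A B by (simp add: mult.commute)
qed

definition alpha :: real where
  "alpha = Sup {(real (cntb b p n) - 1) / real n | p n. n \<ge> 1}"

lemma cross_real:
  assumes "n \<ge> 1" "n' \<ge> 1"
  shows "(real (cntb b q n') - 1) / real n' \<le> (real (cntb b p n) + 1) / real n"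
proof -
  have "real (n * cntb b q n') \<le> real (n' * cntb b p n + n + n')"
    using cross[of n q n' p] by (simp only: of_nat_le_iff)
  then have h: "real n * real (cntb b q n') \<le> real n' * real (cntb b p n) + real n + real n'" by simp
  have "(real (cntb b q n') - 1) * real n \<le> (real (cntb b p n) + 1) * real n'"
    using h by (simp add: algebra_simps)
  then show ?thesis using assms by (simp add: divide_simps)
qed

lemma alpha_bounds:
  assumes "n \<ge> 1"
  shows "real (cntb b p n) - 1 \<le> real n * alpha" "real n * alpha \<le> real (cntb b p n) + 1"
proof -
  let ?S = "{(real (cntb b p n) - 1) / real n | p n. n \<ge> (1::nat)}"
  have ne: "?S \<noteq> {}" by blast
  have ub: "\<forall>y\<in>?S. y \<le> (real (cntb b p n) + 1) / real n" using cross_real assms by auto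
  have "alpha \<le> (real (cntb b p n) + 1) / real n"
    unfolding alpha_def using ne ub by (intro cSup_least) auto
  then show "real n * alpha \<le> real (cntb b p n) + 1" using assms by (simp add: field_simps)
  have bdd: "bdd_above ?S" using ub by (auto simp: bdd_above_def)
  have "(real (cntb b p n) - 1) / real n \<le> alpha"
    unfolding alpha_def using assms by (intro cSup_upper[OF _ bdd]) auto
  then show "real (cntb b p n) - 1 \<le> real n * alpha" using assms by (simp add: field_simps)
qed

lemma alpha_abs: "\<bar>real (cntb b p n) - real n * alpha\<bar> \<le> 1"
proof (cases "n = 0")
  case True then show ?thesis by (simp add: cntb_def)
next
  case False then show ?thesis using alpha_bounds[of n p] by auto
qed

definition g :: "nat \<Rightarrow> real" where
  "g s = real (cntb b 0 s) - real s * alpha"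

lemma g_diff: "g (s + d) - g s = real (cntb b s d) - real d * alpha"
  using cntb_add[of b 0 s d] by (simp add: g_def algebra_simps)

lemma g_close: "\<bar>g s - g s'\<bar> \<le> 1"
proof (cases "s \<le> s'")
  case True
  then obtain d where "s' = s + d" using le_iff_add by blast
  then show ?thesis using g_diff[of s d] alpha_abs[of s d] by (simp add: abs_minus_commute)
next
  case False
  then obtain d where "s = s' + d" by (metis le_iff_add nat_le_linear)
  then show ?thesis using g_diff[of s' d] alpha_abs[of s' d] by simp
qed

lemma cntb_shift1: "cntb b (Suc s) n + (if x s = b then 1 else 0) = cntb b s n + (if x (s+n) = b then 1 else 0)"
  using cntb_cons[of b s n] cntb_Suc[of b s n] by simp

lemma alpha_irrat: "alpha \<notin> \<rat>"
proof
  assume "alpha \<in> \<rat>"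
  then obtain P Q :: int where PQ: "Q > 0" "alpha = of_int P / of_int Q"
    by (auto elim: Rats_cases')
  define Qn where "Qn = nat Q"
  have Qn: "Qn \<ge> 1" "real Qn * alpha = of_int P" using PQ by (auto simp: Qn_def)
  define D where "D s = int (cntb b s Qn) - P" for s
  have Dabs: "\<bar>D s\<bar> \<le> 1" for s
  proof -
    have "\<bar>real (cntb b s Qn) - of_int P\<bar> \<le> 1" using alpha_abs[of s Qn] Qn by simp
    then have "\<bar>of_int (int (cntb b s Qn) - P)\<bar> \<le> (1::real)" by simp
    then show ?thesis unfolding D_def by linarith
  qed
  have Dbal: "D s \<le> D s' + 1" for s s'
    using bal[of s Qn s'] unfolding D_def by linarith
  have sumD: "\<bar>\<Sum>i<k. D (s + i*Qn)\<bar> \<le> 1" for s k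
  proof -
    have "int (cntb b s (k*Qn)) = (\<Sum>i<k. int (cntb b (s + i*Qn) Qn))" by (simp add: blocks)
    then have e: "(\<Sum>i<k. D (s + i*Qn)) = int (cntb b s (k*Qn)) - int k * P"
      by (simp add: D_def sum_subtractf)
    have "\<bar>real (cntb b s (k*Qn)) - real (k*Qn) * alpha\<bar> \<le> 1" by (rule alpha_abs)
    moreover have "real (k*Qn) * alpha = of_int (int k * P)"
    proof -
      have "real (k*Qn) * alpha = real k * (real Qn * alpha)" by simp
      then show ?thesis using Qn(2) by simp
    qed
    moreover have "real (cntb b s (k*Qn)) - of_int (int k * P) = of_int (int (cntb b s (k*Qn)) - int k * P)"
      by simp
    ultimately have "\<bar>of_int (int (cntb b s (k*Qn)) - int k * P)\<bar> \<le> (1::real)" by metis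
    then show ?thesis using e by linarith
  qed
  define Z where "Z = {s. D s \<noteq> 0}"
  have noZ: False if "s \<in> Z" "s + t*Qn \<in> Z" "t \<ge> 1" for s t
  proof -
    let ?f = "\<lambda>i. D (s + i*Qn)"
    have fin: "finite {..<Suc t}" by simp
    have sub: "{0, t} \<subseteq> {..<Suc t}" by auto
    have two: "{0, t} = {0::nat, t}" ..
    have t0: "t \<noteq> 0" using that by simp
    have Ds: "D s = 1 \<or> D s = -1" using Dabs[of s] that(1) unfolding Z_def by auto
    then show False
    proof
      assume D1: "D s = 1"
      have nn: "\<forall>i. ?f i \<ge> 0" using Dbal[of s] D1 by (metis add_le_cancel_right add.commute le_add_same_cancel1 le_less_trans less_le_not_le not_le zle_add1_eq_le)
      have "?f t = 1" using nn[rule_format, of t] Dabs[of "s+t*Qn"] that(2) unfolding Z_def by auto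
      then have "sum ?f {0, t} = 2" using D1 t0 by simp
      moreover have "sum ?f {0, t} \<le> sum ?f {..<Suc t}" using nn by (intro sum_mono2[OF fin sub]) auto
      ultimately show False using sumD[of s "Suc t"] by linarith
    next
      assume D1: "D s = -1"
      have nn: "\<forall>i. ?f i \<le> 0" using Dbal D1 by (metis add.commute add_le_cancel_right diff_ge_0_iff_ge diff_minus_eq_add le_less_trans less_le_not_le not_le zle_add1_eq_le minus_add_cancel)
      have "?f t = -1" using nn[rule_format, of t] Dabs[of "s+t*Qn"] that(2) unfolding Z_def by auto
      then have "sum ?f {0, t} = -2" using D1 t0 by simp
      moreover have "sum (\<lambda>i. - ?f i) {0, t} \<le> sum (\<lambda>i. - ?f i) {..<Suc t}" using nn by (intro sum_mono2[OF fin sub]) auto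
      ultimately show False using sumD[of s "Suc t"] by (simp add: sum_negf)
    qed
  qed
  have "inj_on (\<lambda>s. s mod Qn) Z"
  proof (rule inj_onI)
    fix s1 s2 assume s: "s1 \<in> Z" "s2 \<in> Z" "s1 mod Qn = s2 mod Qn"
    show "s1 = s2"
    proof (rule ccontr)
      assume "s1 \<noteq> s2"
      then consider "s1 < s2" | "s2 < s1" by linarith
      then show False
      proof cases
        case 1
        then have "Qn dvd s2 - s1" using s(3) mod_eq_dvd_iff_nat[of s1 s2 Qn] by simp
        then obtain t where t: "s2 - s1 = Qn * t" by blast
        then have "t \<ge> 1" using 1 by (cases t) auto
        moreover have "s2 = s1 + t * Qn" using t 1 by (simp add: mult.commute)
        ultimately show False using noZ[of s1 t] s by simp
      next
        case 2
        then have "Qn dvd s1 - s2" using s(3) mod_eq_dvd_iff_nat[of s2 s1 Qn] by simp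
        then obtain t where t: "s1 - s2 = Qn * t" by blast
        then have "t \<ge> 1" using 2 by (cases t) auto
        moreover have "s1 = s2 + t * Qn" using t 2 by (simp add: mult.commute)
        ultimately show False using noZ[of s2 t] s by simp
      qed
    qed
  qed
  moreover have "(\<lambda>s. s mod Qn) ` Z \<subseteq> {..<Qn}" using Qn by auto
  ultimately have "finite Z" using inj_on_finite by blast
  then obtain N where N: "\<forall>s\<in>Z. s < N" using finite_nat_set_iff_bounded by blast
  have "\<forall>s\<ge>N. x (s + Qn) = x s"
  proof (intro allI impI)
    fix s assume "s \<ge> N"
    then have "s \<notin> Z" "Suc s \<notin> Z" using N by auto
    then have "cntb b s Qn = cntb b (Suc s) Qn" unfolding Z_def D_def by simp
    then have "(if x s = b then 1 else 0) = (if x (s+Qn) = b then (1::nat) else 0)"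
      using cntb_shift1[of s Qn] by simp
    then show "x (s + Qn) = x s" using letters ab by (metis zero_neq_one)
  qed
  then show False using not_evper[of Qn N] Qn(1) by simp
qed

end

context sturm2
begin

lemma g_range: "\<exists>L. \<forall>s. L \<le> g s \<and> g s \<le> L + 1"
proof -
  define L where "L = Inf (range g)"
  have bdd: "bdd_below (range g)"
  proof (rule bdd_belowI2[of _ "g 0 - 1"])
    fix s show "g 0 - 1 \<le> g s" using g_close[of 0 s] by (simp add: abs_le_iff)
  qed
  have "L \<le> g s" for s unfolding L_def using bdd by (intro cInf_lower) auto
  moreover have "g s - 1 \<le> L" for s
    unfolding L_def
  proof (rule cInf_greatest)
    show "range g \<noteq> {}" by simp
    fix y assume "y \<in> range g"
    then obtain s' where "y = g s'" by auto
    then show "g s - 1 \<le> y" using g_close[of s s'] by (simp add: abs_le_iff)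
  qed
  ultimately show ?thesis by (intro exI[of _ L]) (auto simp: algebra_simps)
qed

lemma frac_self: "0 \<le> y \<Longrightarrow> y \<le> 1 \<Longrightarrow> 0 < frac y \<Longrightarrow> frac y = (y::real)"
proof -
  assume y: "0 \<le> y" "y \<le> 1" "0 < frac y"
  have "y \<noteq> 1" using y(3) by auto
  then show ?thesis using y by (simp add: frac_eq)
qed

lemma main:
  assumes k: "k > 1"
  shows "\<exists>n. anti_power k (factor x j n)"
proof -
  obtain L where L: "\<forall>s. L \<le> g s \<and> g s \<le> L + 1" using g_range by blast
  define \<epsilon> :: real where "\<epsilon> = 1 / (4 * real k)"
  have kr: "real k \<ge> 2" using k by simp
  have ep: "\<epsilon> > 0" "\<epsilon> \<le> 1" using kr by (auto simp: \<epsilon>_def)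
  have irr: "alpha \<notin> \<rat>" by (rule alpha_irrat)
  have irr': "- alpha \<notin> \<rat>" using irr by (simp add: Rats_minus_iff)
  obtain M1 :: nat where M1: "\<forall>c u. 0 \<le> u \<longrightarrow> u + \<epsilon> \<le> 1 \<longrightarrow>
           (\<exists>t\<le>M1. u < frac (c + real t * (-alpha)) \<and> frac (c + real t * (-alpha)) < u + \<epsilon>)"
    using density[OF irr' ep] by blast
  obtain M2 :: nat where M2: "\<forall>c u. 0 \<le> u \<longrightarrow> u + \<epsilon> \<le> 1 \<longrightarrow>
           (\<exists>t\<le>M2. u < frac (c + real t * alpha) \<and> frac (c + real t * alpha) < u + \<epsilon>)"
    using density[OF irr ep] by blast
  have u2: "0 \<le> 1 / (2 * real k)" "1 / (2 * real k) + \<epsilon> \<le> 1" using kr by (auto simp: \<epsilon>_def field_simps)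
  obtain t2 where t2: "1/(2*real k) < frac (real M1 * alpha + real t2 * alpha)"
      "frac (real M1 * alpha + real t2 * alpha) < 1/(2*real k) + \<epsilon>"
    using M2 u2 by blast
  define m where "m = M1 + t2"
  define \<gamma> where "\<gamma> = frac (real m * alpha)"
  have \<gamma>: "1/(2*real k) < \<gamma>" "\<gamma> < 1/(2*real k) + \<epsilon>"
    using t2 by (auto simp: \<gamma>_def m_def distrib_right)
  have m1: "m \<ge> 1"
  proof (rule ccontr)
    assume "\<not> m \<ge> 1" then have "m = 0" by simp
    then have "\<gamma> = 0" by (simp add: \<gamma>_def)
    moreover have "0 < 1/(2*real k)" using kr by simp
    ultimately show False using \<gamma> by linarith
  qed
  have M1m: "M1 \<le> m" by (simp add: m_def)
  have differ: "\<exists>s. P0 \<le> s \<and> s < P0 + m \<and> x s \<noteq> x (s + e*m)" if e: "1 \<le> e" "e < k" for P0 e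
  proof -
    define d where "d = e * m"
    define \<beta> where "\<beta> = frac (real d * alpha)"
    have h1: "real e \<le> real k - 1" using e by linarith
    have h2: "\<gamma> \<le> 3 / (4 * real k)" using \<gamma> kr by (simp add: \<epsilon>_def field_simps)
    have h3: "0 \<le> real k - 1" using kr by simp
    have h4: "0 \<le> \<gamma>" by (simp add: \<gamma>_def)
    have eb: "real e * \<gamma> \<le> (real k - 1) * (3 / (4 * real k))"
      by (rule mult_mono[OF h1 h2 h3 h4])
    have eg: "real e * \<gamma> < 1"
    proof -
      have "(real k - 1) * (3 / (4 * real k)) < 1" using kr by (simp add: field_simps)
      then show ?thesis using eb by linarith
    qed
    have b_eq: "\<beta> = real e * \<gamma>"
    proof -
      have "real d * alpha - real e * \<gamma> = real e * (real m * alpha - \<gamma>)" by (simp add: d_def algebra_simps)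
      also have "\<dots> = of_int (int e * \<lfloor>real m * alpha\<rfloor>)" by (simp add: \<gamma>_def frac_def)
      finally have "real d * alpha - real e * \<gamma> \<in> \<int>" by simp
      moreover have "0 \<le> real e * \<gamma>" by (simp add: \<gamma>_def)
      ultimately show ?thesis unfolding \<beta>_def using eg by (simp add: frac_unique_iff)
    qed
    have \<beta>1: "\<epsilon> < \<beta>"
    proof -
      have e1: "1 \<le> real e" using e by simp
      have "1 * \<gamma> \<le> real e * \<gamma>" by (rule mult_right_mono[OF e1 h4])
      moreover have "\<epsilon> < 1/(2*real k)" using kr by (simp add: \<epsilon>_def field_simps)
      ultimately show ?thesis using \<gamma> b_eq by linarith
    qed
    have \<beta>2: "\<beta> + \<epsilon> < 1"
    proof -
      have "(real k - 1) * (3 / (4 * real k)) + \<epsilon> < 1" using kr by (simp add: \<epsilon>_def field_simps)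
      then show ?thesis using b_eq eb by linarith
    qed
    have gshift: "frac (g (P0 + t) - L) = frac (g P0 - L + real t * (-alpha))" for t
    proof -
      have "g (P0 + t) - L = (g P0 - L + real t * (-alpha)) + of_int (int (cntb b P0 t))"
        using g_diff[of P0 t] by simp
      then show ?thesis by (simp only: frac_add_of_int_right)
    qed
    obtain t1 where t1: "t1 \<le> M1" "0 < frac (g P0 - L + real t1 * (-alpha))" "frac (g P0 - L + real t1 * (-alpha)) < \<epsilon>"
      using M1 ep by fastforce
    have "\<exists>t\<le>M1. 1 - \<epsilon> < frac (g P0 - L + real t * (-alpha)) \<and> frac (g P0 - L + real t * (-alpha)) < 1 - \<epsilon> + \<epsilon>"
      using M1[rule_format, where c="g P0 - L" and u="1 - \<epsilon>"] ep by simp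
    then obtain t3 where t3: "t3 \<le> M1" "1 - \<epsilon> < frac (g P0 - L + real t3 * (-alpha))"
      by blast
    define s1 where "s1 = P0 + t1"
    define s2 where "s2 = P0 + t3"
    have gs1: "g s1 - L < \<beta>"
    proof -
      have "frac (g s1 - L) = g s1 - L" using L t1(2) gshift[of t1]
        by (intro frac_self) (auto simp: s1_def algebra_simps)
      then show ?thesis using t1(3) gshift[of t1] \<beta>1 by (simp add: s1_def)
    qed
    have gs2: "g s2 - L > \<beta>"
    proof -
      have f2: "frac (g s2 - L) > 1 - \<epsilon>" using t3(2) gshift[of t3] by (simp add: s2_def)
      then have "0 < frac (g s2 - L)" using ep by linarith
      then have "frac (g s2 - L) = g s2 - L" using L by (intro frac_self) (auto simp: algebra_simps)
      then show ?thesis using f2 \<beta>2 by linarith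
    qed
    have fl: "\<beta> = real d * alpha - of_int \<lfloor>real d * alpha\<rfloor>" by (simp add: \<beta>_def frac_def)
    have c1: "real (cntb b s1 d) > of_int \<lfloor>real d * alpha\<rfloor>"
      using g_diff[of s1 d] L[rule_format, of "s1+d"] gs1 fl by linarith
    have c2: "real (cntb b s2 d) < of_int \<lfloor>real d * alpha\<rfloor> + 1"
      using g_diff[of s2 d] L[rule_format, of "s2+d"] gs2 fl by linarith
    have i1: "\<lfloor>real d * alpha\<rfloor> < int (cntb b s1 d)"
    proof -
      have "(of_int \<lfloor>real d * alpha\<rfloor> :: real) < of_int (int (cntb b s1 d))" using c1 by simp
      then show ?thesis by (simp only: of_int_less_iff)
    qed
    have i2: "int (cntb b s2 d) < \<lfloor>real d * alpha\<rfloor> + 1"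
    proof -
      have "(of_int (int (cntb b s2 d)) :: real) < of_int (\<lfloor>real d * alpha\<rfloor> + 1)" using c2 by simp
      then show ?thesis by (simp only: of_int_less_iff)
    qed
    have ne: "cntb b s1 d \<noteq> cntb b s2 d" using i1 i2 by linarith
    show ?thesis
    proof (rule ccontr)
      assume H: "\<not> ?thesis"
      have "i \<le> m \<Longrightarrow> cntb b (P0 + i) d = cntb b P0 d" for i
      proof (induction i)
        case 0 then show ?case by simp
      next
        case (Suc i)
        have "x (P0 + i) = x (P0 + i + d)" using H Suc.prems by (auto simp: d_def)
        then show ?case using cntb_shift1[of "P0 + i" d] Suc by simp
      qed
      then have "cntb b s1 d = cntb b s2 d" using t1(1) t3(1) M1m by (simp add: s1_def s2_def)
      then show False using ne by simp
    qed
  qed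
  define w where "w = factor x j (k*m)"
  have blk: "take m (drop (i*m) w) = factor x (j + i*m) m" if "i < k" for i
  proof -
    have "1 \<le> k - i" using that by simp
    then have "1 * m \<le> (k - i) * m" by (rule mult_right_mono) simp
    then have "m \<le> k*m - i*m" by (simp add: diff_mult_distrib)
    then show ?thesis by (simp add: w_def drop_factor take_factor)
  qed
  have dist: "factor x (j + i*m) m \<noteq> factor x (j + i'*m) m" if "i < i'" "i' < k" for i i'
  proof -
    have "1 \<le> i'-i" "i'-i < k" using that by auto
    then obtain s where s: "j + i*m \<le> s" "s < j + i*m + m" "x s \<noteq> x (s + (i'-i)*m)"
      using differ[of "i'-i" "j + i*m"] by blast
    define t where "t = s - (j + i*m)"
    have tm: "t < m" using s by (simp add: t_def)
    have "factor x (j + i*m) m ! t = x s" using tm s by (simp add: t_def)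
    moreover have "factor x (j + i'*m) m ! t = x (s + (i'-i)*m)"
    proof -
      have "j + i'*m + t = s + (i'-i)*m" using s that by (simp add: t_def diff_mult_distrib)
      then show ?thesis using tm by simp
    qed
    ultimately show ?thesis using s(3) by auto
  qed
  have "anti_power k w"
    unfolding anti_power_def
  proof (intro exI[of _ m] conjI allI impI)
    show "1 \<le> m" using m1 .
    show "length w = k * m" by (simp add: w_def)
    fix i i' assume ii: "i < k" "i' < k" "i \<noteq> i'"
    show "take m (drop (i*m) w) \<noteq> take m (drop (i'*m) w)"
    proof (cases "i < i'")
      case True then show ?thesis using blk[OF ii(1)] blk[OF ii(2)] dist[of i i'] ii by simp
    next
      case False
      then have "i' < i" using ii by simp
      then show ?thesis using blk[OF ii(1)] blk[OF ii(2)] dist[of i' i] ii by auto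
    qed
  qed
  then show ?thesis unfolding w_def by blast
qed

end

theorem corollary4p12:
  fixes x :: "nat \<Rightarrow> 'a" and k j :: nat
  assumes "sturmian x" and "k > 1"
  shows "\<exists>n. anti_power k (factor x j n)"
proof -
  interpret sturm x using assms(1) by unfold_locales
  obtain a b where ab: "a \<noteq> b" "\<forall>s. x s = a \<or> x s = b" using binary by blast
  interpret sturm2 x a b using ab by unfold_locales auto
  show ?thesis using main[OF assms(2)] .
qed

end
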